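(* For $p\in(0,1)$ and $y\in(0,1)$ let $$I(y)=\log(y)\log\!\left(\frac{\log p}{\log y}\right)+\log\!\left(\frac yp\right),\qquad \mathcal{I}(y)=y\log\!\left(\frac yp\right)+(1-y)\log\!\left(\frac{1-y}{1-p}\right).$$ Then for all $p,y\in(0,1)$, $I(y)\ge\mathcal{I}(y)$, with equality if and only if $y=p$.
   Context: $\mathcal{I}$ is the Cramér rate function of the empirical mean of i.i.d. Bernoulli($p$) variables; $I$ is the rate function of the Adaptive Multilevel Splitting estimator. *)

theory Defs
  imports Complex_Main
begin

definition AMS_rate :: "real \<Rightarrow> real \<Rightarrow> real" where
  "AMS_rate p y = ln y * ln (ln p / ln y) + ln (y / p)"

text \<open>Cramer rate function of the empirical mean of iid Bernoulli(p) variables.\<close>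
definition cramer_rate :: "real \<Rightarrow> real \<Rightarrow> real" where
  "cramer_rate p y = y * ln (y / p) + (1 - y) * ln ((1 - y) / (1 - p))"

end

theory Submission
  imports Defs
begin

definition DD :: "real \<Rightarrow> real" where "DD x = x / (1 - exp (-x))"
definition GG :: "real \<Rightarrow> real" where "GG s = ln (exp (exp s) - 1)"

lemma DD_mono:
  assumes "0 < x" "x < z" shows "DD x < DD z"
proof -
  have "\<forall>t. x \<le> t \<and> t \<le> z \<longrightarrow> (\<exists>d. (DD has_real_derivative d) (at t) \<and> 0 < d)"
  proof (intro allI impI)
    fix t assume t: "x \<le> t \<and> t \<le> z"
    hence tp: "0 < t" using assms by auto
    have e: "exp (-t) < 1" using tp by simp
    have "(DD has_real_derivative ((1 - exp (-t)) - t * exp (-t)) / (1 - exp (-t))^2) (at t)"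
      unfolding DD_def using e
      by (auto intro!: derivative_eq_intros simp: power2_eq_square field_simps)
    moreover have "0 < ((1 - exp (-t)) - t * exp (-t)) / (1 - exp (-t))^2"
    proof -
      have "t + 1 < exp t" using tp exp_minus_greater[of "-t"] by simp
      hence "(t + 1) * exp (-t) < exp t * exp (-t)" by (intro mult_strict_right_mono) auto
      hence "(t+1) * exp (-t) < 1" by (simp add: exp_minus field_simps)
      hence "0 < (1 - exp (-t)) - t * exp (-t)" by (simp add: algebra_simps)
      moreover have "0 < (1 - exp (-t))^2" using e by simp
      ultimately show ?thesis by simp
    qed
    ultimately show "\<exists>d. (DD has_real_derivative d) (at t) \<and> 0 < d" by blast
  qed
  thus ?thesis using DERIV_pos_imp_increasing[OF assms(2)] by blast
qed

lemma GG_deriv: "(GG has_real_derivative DD (exp s)) (at s)"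
proof -
  have pos: "exp (exp s) - 1 > 0" by simp
  have "(GG has_real_derivative exp (exp s) * exp s / (exp (exp s) - 1)) (at s)"
    unfolding GG_def using pos by (auto intro!: derivative_eq_intros)
  moreover have "exp (exp s) * exp s / (exp (exp s) - 1) = DD (exp s)"
  proof -
    have "exp (exp s) * (1 - exp (- exp s)) = exp (exp s) - 1"
      by (simp add: algebra_simps exp_minus)
    moreover have "1 - exp (- exp s) > 0" by simp
    ultimately show ?thesis unfolding DD_def using pos
      by (simp add: field_simps)
  qed
  ultimately show ?thesis by simp
qed

lemma GG_strict:
  assumes "r \<noteq> s" shows "GG r > GG s + DD (exp s) * (r - s)"
proof (cases "r < s")
  case True
  obtain z where z: "r < z" "z < s" "GG s - GG r = (s - r) * DD (exp z)"
    using MVT2[OF True, of GG "\<lambda>t. DD (exp t)"] GG_deriv by blast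
  have "DD (exp z) < DD (exp s)" using z by (intro DD_mono) auto
  hence "(s - r) * DD (exp z) < (s - r) * DD (exp s)" using True by simp
  thus ?thesis using z by (simp add: algebra_simps)
next
  case False
  hence F: "s < r" using assms by simp
  obtain z where z: "s < z" "z < r" "GG r - GG s = (r - s) * DD (exp z)"
    using MVT2[OF F, of GG "\<lambda>t. DD (exp t)"] GG_deriv by blast
  have "DD (exp s) < DD (exp z)" using z by (intro DD_mono) auto
  hence "(r - s) * DD (exp s) < (r - s) * DD (exp z)" using F by simp
  thus ?thesis using z by (simp add: algebra_simps)
qed

lemma key:
  fixes p y :: real
  assumes "0 < p" "p < 1" "0 < y" "y < 1" "y \<noteq> p"
  shows "AMS_rate p y > cramer_rate p y"
proof -
  define a where "a = - ln p"
  define b where "b = - ln y"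
  have a: "a > 0" using assms unfolding a_def by simp
  have b: "b > 0" using assms unfolding b_def by simp
  have ea: "exp a = 1 / p" using assms unfolding a_def by (simp add: exp_minus divide_inverse)
  have eb: "exp b = 1 / y" using assms unfolding b_def by (simp add: exp_minus divide_inverse)
  have ey: "exp (-b) = y" using assms unfolding b_def by simp
  have ab: "ln a \<noteq> ln b"
  proof
    assume "ln a = ln b" hence "a = b" using a b by simp
    hence "ln p = ln y" unfolding a_def b_def by simp
    thus False using assms by simp
  qed
  have Gr: "GG (ln a) = ln (1 - p) + a"
  proof -
    have "exp (exp (ln a)) - 1 = (1 - p) / p" using a ea assms by (simp add: field_simps)
    thus ?thesis unfolding GG_def a_def using assms by (simp add: ln_div)
  qed
  have Gs: "GG (ln b) = ln (1 - y) + b"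
  proof -
    have "exp (exp (ln b)) - 1 = (1 - y) / y" using b eb assms by (simp add: field_simps)
    thus ?thesis unfolding GG_def b_def using assms by (simp add: ln_div)
  qed
  have D: "DD (exp (ln b)) = b / (1 - y)" using b ey unfolding DD_def by simp
  have ineq: "ln (1 - p) + a > ln (1 - y) + b + b / (1 - y) * (ln a - ln b)"
    using GG_strict[OF ab] Gr Gs D by simp
  have y1: "1 - y > 0" using assms by simp
  have ineq2: "(1 - y) * (ln (1 - p) + a) > (1 - y) * (ln (1 - y) + b) + b * (ln a - ln b)"
  proof -
    have "(1 - y) * (ln (1 - p) + a) > (1 - y) * (ln (1 - y) + b + b / (1 - y) * (ln a - ln b))"
      using ineq y1 by (intro mult_strict_left_mono) auto
    moreover have "(1 - y) * (b / (1 - y) * (ln a - ln b)) = b * (ln a - ln b)" using y1 by simp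
    ultimately show ?thesis by (simp add: distrib_left)
  qed
  have lnq: "ln (ln p / ln y) = ln a - ln b"
  proof -
    have "ln p / ln y = a / b" unfolding a_def b_def by simp
    thus ?thesis using a b by (simp add: ln_div)
  qed
  have AMS: "AMS_rate p y = - b * (ln a - ln b) - b + a"
    unfolding AMS_rate_def lnq using assms by (simp add: ln_div a_def b_def)
  have CR: "cramer_rate p y = y * (a - b) + (1 - y) * (ln (1 - y) - ln (1 - p))"
    unfolding cramer_rate_def using assms by (simp add: ln_div a_def b_def algebra_simps)
  show ?thesis unfolding AMS CR using ineq2 by (simp add: algebra_simps)
qed

theorem proposition6p1:
  fixes p y :: real
  assumes "0 < p" "p < 1" "0 < y" "y < 1"
  shows "AMS_rate p y \<ge> cramer_rate p y \<and> (AMS_rate p y = cramer_rate p y \<longleftrightarrow> y = p)"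
proof (cases "y = p")
  case True
  have "AMS_rate p y = 0" using True assms unfolding AMS_rate_def by simp
  moreover have "cramer_rate p y = 0" using True assms unfolding cramer_rate_def by simp
  ultimately show ?thesis using True by simp
next
  case False
  thus ?thesis using key[OF assms False] by simp
qed

end
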